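(* Fix $K\in\mathbb{R}$ and consider the framed curvature flow with $\theta$-velocity $$\upsilon_\theta=-\kappa\psi_2^{-1}K-(\kappa\,\partial_s\psi_3+2\,\partial_s\kappa\,\psi_3)\kappa^{-2}\psi_1-\kappa\psi_2^{-1}\psi_3^2-(\partial_s^2\kappa-\kappa\psi_3^2)\kappa^{-2}\psi_2 .$$ Then the trajectory surface $\Sigma_{\underline t}$ generated by this flow has constant Gaussian curvature equal to $K$.
   Context: $S^1=\mathbb{R}/2\pi\mathbb{Z}$; closed curves $\Gamma_t$ parametrized by $\gamma(t,\cdot):S^1\to\mathbb{R}^3$, $g=\|\partial_u\gamma\|$, $ds=g\,du$, $\partial_s=g^{-1}\partial_u$; Frenet frame $T,N,B$, curvature $\kappa$, torsion $\tau$. For an angle function $\theta$: $\nu_\theta=\cos\theta N+\sin\theta B$, $\psi_1=\kappa\cos\theta$, $\psi_2=\kappa\sin\theta$, $\psi_3=\tau+\partial_s\theta$; the formula for $\upsilon_\theta$ presupposes $\kappa>0$ and $\psi_2\neq0$. Framed curvature flow: $\partial_t\gamma=\kappa\nu_\theta$, $\partial_t\theta=\upsilon_\theta$ on $[0,\underline t)\times S^1$. Trajectory surface $\Sigma_{\underline t}=\bigcup_{t\in[0,\underline t)}\Gamma_t$, parametrized by $\gamma(t,u)$. *)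

theory Defs
  imports "HOL-Analysis.Analysis"
begin

text \<open>Maps on the strip are written in curried form f t u, t the time, u the
  curve parameter (S^1 = R/2piZ is represented by 2pi-periodicity in u).\<close>

definition Dt :: "real \<Rightarrow> (real \<Rightarrow> real \<Rightarrow> 'a::real_normed_vector) \<Rightarrow> real \<Rightarrow> real \<Rightarrow> 'a" where
  "Dt tb f t u = vector_derivative (\<lambda>t'. f t' u) (at t within {0..<tb})"

definition Du :: "(real \<Rightarrow> real \<Rightarrow> 'a::real_normed_vector) \<Rightarrow> real \<Rightarrow> real \<Rightarrow> 'a" where
  "Du f t u = vector_derivative (\<lambda>u'. f t u') (at u)"

text \<open>Iterated partial derivatives: True = d/dt, False = d/du.\<close>
fun pd :: "real \<Rightarrow> bool list \<Rightarrow> (real \<Rightarrow> real \<Rightarrow> 'a::real_normed_vector) \<Rightarrow> real \<Rightarrow> real \<Rightarrow> 'a" where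
  "pd tb [] f = f"
| "pd tb (True # ds) f = Dt tb (pd tb ds f)"
| "pd tb (False # ds) f = Du (pd tb ds f)"

definition smooth_strip :: "real \<Rightarrow> (real \<Rightarrow> real \<Rightarrow> 'a::real_normed_vector) \<Rightarrow> bool" where
  "smooth_strip tb f \<longleftrightarrow>
     (\<forall>ds. continuous_on ({0..<tb} \<times> UNIV) (\<lambda>(t,u). pd tb ds f t u) \<and>
       (\<forall>t\<in>{0..<tb}. \<forall>u.
          ((\<lambda>t'. pd tb ds f t' u) has_vector_derivative pd tb (True # ds) f t u) (at t within {0..<tb}) \<and>
          ((\<lambda>u'. pd tb ds f t u') has_vector_derivative pd tb (False # ds) f t u) (at u)))"

definition speed :: "(real \<Rightarrow> real \<Rightarrow> real^3) \<Rightarrow> real \<Rightarrow> real \<Rightarrow> real" where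
  "speed \<gamma> t u = norm (Du \<gamma> t u)"

definition Ds :: "(real \<Rightarrow> real \<Rightarrow> real^3) \<Rightarrow> (real \<Rightarrow> real \<Rightarrow> 'a::real_normed_vector) \<Rightarrow> real \<Rightarrow> real \<Rightarrow> 'a" where
  "Ds \<gamma> f t u = (1 / speed \<gamma> t u) *\<^sub>R Du f t u"

definition tangent :: "(real \<Rightarrow> real \<Rightarrow> real^3) \<Rightarrow> real \<Rightarrow> real \<Rightarrow> real^3" where
  "tangent \<gamma> = Ds \<gamma> \<gamma>"

definition curvature :: "(real \<Rightarrow> real \<Rightarrow> real^3) \<Rightarrow> real \<Rightarrow> real \<Rightarrow> real" where
  "curvature \<gamma> t u = norm (Ds \<gamma> (tangent \<gamma>) t u)"

definition normal :: "(real \<Rightarrow> real \<Rightarrow> real^3) \<Rightarrow> real \<Rightarrow> real \<Rightarrow> real^3" where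
  "normal \<gamma> t u = (1 / curvature \<gamma> t u) *\<^sub>R Ds \<gamma> (tangent \<gamma>) t u"

definition binormal :: "(real \<Rightarrow> real \<Rightarrow> real^3) \<Rightarrow> real \<Rightarrow> real \<Rightarrow> real^3" where
  "binormal \<gamma> t u = cross3 (tangent \<gamma> t u) (normal \<gamma> t u)"

definition torsion :: "(real \<Rightarrow> real \<Rightarrow> real^3) \<Rightarrow> real \<Rightarrow> real \<Rightarrow> real" where
  "torsion \<gamma> t u = Ds \<gamma> (normal \<gamma>) t u \<bullet> binormal \<gamma> t u"

definition nu :: "(real \<Rightarrow> real \<Rightarrow> real^3) \<Rightarrow> (real \<Rightarrow> real \<Rightarrow> real) \<Rightarrow> real \<Rightarrow> real \<Rightarrow> real^3" where
  "nu \<gamma> \<theta> t u = cos (\<theta> t u) *\<^sub>R normal \<gamma> t u + sin (\<theta> t u) *\<^sub>R binormal \<gamma> t u"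

definition psi1 :: "(real \<Rightarrow> real \<Rightarrow> real^3) \<Rightarrow> (real \<Rightarrow> real \<Rightarrow> real) \<Rightarrow> real \<Rightarrow> real \<Rightarrow> real" where
  "psi1 \<gamma> \<theta> t u = curvature \<gamma> t u * cos (\<theta> t u)"

definition psi2 :: "(real \<Rightarrow> real \<Rightarrow> real^3) \<Rightarrow> (real \<Rightarrow> real \<Rightarrow> real) \<Rightarrow> real \<Rightarrow> real \<Rightarrow> real" where
  "psi2 \<gamma> \<theta> t u = curvature \<gamma> t u * sin (\<theta> t u)"

definition psi3 :: "(real \<Rightarrow> real \<Rightarrow> real^3) \<Rightarrow> (real \<Rightarrow> real \<Rightarrow> real) \<Rightarrow> real \<Rightarrow> real \<Rightarrow> real" where
  "psi3 \<gamma> \<theta> t u = torsion \<gamma> t u + Ds \<gamma> \<theta> t u"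

definition upsilon :: "real \<Rightarrow> (real \<Rightarrow> real \<Rightarrow> real^3) \<Rightarrow> (real \<Rightarrow> real \<Rightarrow> real) \<Rightarrow> real \<Rightarrow> real \<Rightarrow> real" where
  "upsilon K \<gamma> \<theta> t u =
     (let \<kappa> = curvature \<gamma> t u; \<psi>\<^sub>1 = psi1 \<gamma> \<theta> t u; \<psi>\<^sub>2 = psi2 \<gamma> \<theta> t u; \<psi>\<^sub>3 = psi3 \<gamma> \<theta> t u;
          ds\<psi>\<^sub>3 = Ds \<gamma> (psi3 \<gamma> \<theta>) t u; ds\<kappa> = Ds \<gamma> (curvature \<gamma>) t u;
          dss\<kappa> = Ds \<gamma> (Ds \<gamma> (curvature \<gamma>)) t u
      in - \<kappa> * inverse \<psi>\<^sub>2 * K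
         - (\<kappa> * ds\<psi>\<^sub>3 + 2 * ds\<kappa> * \<psi>\<^sub>3) * inverse (\<kappa>\<^sup>2) * \<psi>\<^sub>1
         - \<kappa> * inverse \<psi>\<^sub>2 * \<psi>\<^sub>3\<^sup>2
         - (dss\<kappa> - \<kappa> * \<psi>\<^sub>3\<^sup>2) * inverse (\<kappa>\<^sup>2) * \<psi>\<^sub>2)"

definition gauss_curv :: "real \<Rightarrow> (real \<Rightarrow> real \<Rightarrow> real^3) \<Rightarrow> real \<Rightarrow> real \<Rightarrow> real" where
  "gauss_curv tb X t u =
     (let Xt = Dt tb X t u; Xu = Du X t u;
          n = (1 / norm (cross3 Xt Xu)) *\<^sub>R cross3 Xt Xu;
          E = Xt \<bullet> Xt; F = Xt \<bullet> Xu; G = Xu \<bullet> Xu;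
          L = Dt tb (Dt tb X) t u \<bullet> n;
          M = Du (Dt tb X) t u \<bullet> n;
          N = Du (Du X) t u \<bullet> n
      in (L * N - M\<^sup>2) / (E * G - F\<^sup>2))"

end

theory Submission
  imports Defs
begin


section \<open>Generic derivative calculus for functions of one real variable\<close>

lemma bb_cross: "bounded_bilinear (cross3 :: real^3 \<Rightarrow> real^3 \<Rightarrow> real^3)"
  by (rule bilinear_conv_bounded_bilinear[THEN iffD1], rule bilinear_cross)

lemma dw_bil:
  fixes f :: "real \<Rightarrow> 'a::real_normed_vector" and g :: "real \<Rightarrow> 'b::real_normed_vector"
    and prod :: "'a \<Rightarrow> 'b \<Rightarrow> 'c::real_normed_vector"
  assumes "bounded_bilinear prod"
    and "f differentiable (at x within s)" and "g differentiable (at x within s)"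
  shows "(\<lambda>x. prod (f x) (g x)) differentiable (at x within s)"
  using bounded_bilinear.has_vector_derivative[OF assms(1)
      assms(2)[unfolded vector_derivative_works] assms(3)[unfolded vector_derivative_works]]
  by (rule differentiableI_vector)

lemma vdw_bil:
  fixes f :: "real \<Rightarrow> 'a::real_normed_vector" and g :: "real \<Rightarrow> 'b::real_normed_vector"
    and prod :: "'a \<Rightarrow> 'b \<Rightarrow> 'c::real_normed_vector"
  assumes "bounded_bilinear prod" and nb: "at x within s \<noteq> bot"
    and "f differentiable (at x within s)" and "g differentiable (at x within s)"
  shows "vector_derivative (\<lambda>x. prod (f x) (g x)) (at x within s) =
     prod (f x) (vector_derivative g (at x within s)) + prod (vector_derivative f (at x within s)) (g x)"
  using bounded_bilinear.has_vector_derivative[OF assms(1)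
      assms(3)[unfolded vector_derivative_works] assms(4)[unfolded vector_derivative_works]]
  by (rule vector_derivative_within[OF nb])

lemmas dw_scaleR = dw_bil[OF bounded_bilinear_scaleR]
lemmas dw_mult = dw_bil[OF bounded_bilinear_mult]
lemmas dw_inner = dw_bil[OF bounded_bilinear_inner]
lemmas dw_cross = dw_bil[OF bb_cross]
lemmas vdw_scaleR = vdw_bil[OF bounded_bilinear_scaleR]
lemmas vdw_mult = vdw_bil[OF bounded_bilinear_mult]
lemmas vdw_inner = vdw_bil[OF bounded_bilinear_inner]
lemmas vdw_cross = vdw_bil[OF bb_cross]

lemma dw_add:
  fixes f g :: "real \<Rightarrow> 'a::real_normed_vector"
  assumes "f differentiable (at x within s)" "g differentiable (at x within s)"
  shows "(\<lambda>x. f x + g x) differentiable (at x within s)"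
  using has_vector_derivative_add[OF assms[unfolded vector_derivative_works]] by (rule differentiableI_vector)

lemma vdw_add:
  fixes f g :: "real \<Rightarrow> 'a::real_normed_vector"
  assumes "at x within s \<noteq> bot" "f differentiable (at x within s)" "g differentiable (at x within s)"
  shows "vector_derivative (\<lambda>x. f x + g x) (at x within s) = vector_derivative f (at x within s) + vector_derivative g (at x within s)"
  using has_vector_derivative_add[OF assms(2,3)[unfolded vector_derivative_works]] by (rule vector_derivative_within[OF assms(1)])

lemma dw_diff:
  fixes f g :: "real \<Rightarrow> 'a::real_normed_vector"
  assumes "f differentiable (at x within s)" "g differentiable (at x within s)"
  shows "(\<lambda>x. f x - g x) differentiable (at x within s)"
  using has_vector_derivative_diff[OF assms[unfolded vector_derivative_works]] by (rule differentiableI_vector)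

lemma vdw_diff:
  fixes f g :: "real \<Rightarrow> 'a::real_normed_vector"
  assumes "at x within s \<noteq> bot" "f differentiable (at x within s)" "g differentiable (at x within s)"
  shows "vector_derivative (\<lambda>x. f x - g x) (at x within s) = vector_derivative f (at x within s) - vector_derivative g (at x within s)"
  using has_vector_derivative_diff[OF assms(2,3)[unfolded vector_derivative_works]] by (rule vector_derivative_within[OF assms(1)])

lemma dw_const: "(\<lambda>x::real. c::'a::real_normed_vector) differentiable (at x within s)"
  by (rule differentiableI_vector, rule has_vector_derivative_const)

lemma vdw_const: "at (x::real) within s \<noteq> bot \<Longrightarrow> vector_derivative (\<lambda>x. c::'a::real_normed_vector) (at x within s) = 0"
  by (rule vector_derivative_within, assumption, rule has_vector_derivative_const)

lemma hvd_real_chain: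
  fixes f :: "real \<Rightarrow> real"
  assumes "DERIV h (f x) :> h'" and "(f has_vector_derivative f') (at x within s)"
  shows "((\<lambda>x. h (f x)) has_vector_derivative h' * f') (at x within s)"
  using DERIV_chain2[OF assms(1) assms(2)[unfolded has_real_derivative_iff_has_vector_derivative[symmetric]]]
  by (simp add: has_real_derivative_iff_has_vector_derivative)

lemma dw_chain:
  fixes f :: "real \<Rightarrow> real"
  assumes "DERIV h (f x) :> h'" and "f differentiable (at x within s)"
  shows "(\<lambda>x. h (f x)) differentiable (at x within s)"
  using hvd_real_chain[OF assms(1) assms(2)[unfolded vector_derivative_works]]
  by (rule differentiableI_vector)

lemma vdw_chain:
  fixes f :: "real \<Rightarrow> real"
  assumes "at x within s \<noteq> bot" "DERIV h (f x) :> h'" and "f differentiable (at x within s)"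
  shows "vector_derivative (\<lambda>x. h (f x)) (at x within s) = h' * vector_derivative f (at x within s)"
  using hvd_real_chain[OF assms(2) assms(3)[unfolded vector_derivative_works]]
  by (rule vector_derivative_within[OF assms(1)])

lemma dw_inverse:
  fixes f :: "real \<Rightarrow> real"
  shows "f x \<noteq> 0 \<Longrightarrow> f differentiable (at x within s) \<Longrightarrow> (\<lambda>x. inverse (f x)) differentiable (at x within s)"
  by (rule dw_chain[OF DERIV_inverse])

lemma vdw_inverse:
  fixes f :: "real \<Rightarrow> real"
  shows "at x within s \<noteq> bot \<Longrightarrow> f x \<noteq> 0 \<Longrightarrow> f differentiable (at x within s) \<Longrightarrow>
    vector_derivative (\<lambda>x. inverse (f x)) (at x within s) = - (vector_derivative f (at x within s) * (inverse (f x) * inverse (f x)))"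
  by (subst vdw_chain[OF _ DERIV_inverse]) (auto simp: power2_eq_square)

lemma dw_sqrt:
  fixes f :: "real \<Rightarrow> real"
  shows "f x > 0 \<Longrightarrow> f differentiable (at x within s) \<Longrightarrow> (\<lambda>x. sqrt (f x)) differentiable (at x within s)"
  by (rule dw_chain[OF DERIV_real_sqrt])

lemma vdw_sqrt:
  fixes f :: "real \<Rightarrow> real"
  shows "at x within s \<noteq> bot \<Longrightarrow> f x > 0 \<Longrightarrow> f differentiable (at x within s) \<Longrightarrow>
    vector_derivative (\<lambda>x. sqrt (f x)) (at x within s) = vector_derivative f (at x within s) * (inverse 2 * inverse (sqrt (f x)))"
  by (subst vdw_chain[OF _ DERIV_real_sqrt]) (auto simp: field_simps)

lemma dw_sin:
  fixes f :: "real \<Rightarrow> real"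
  shows "f differentiable (at x within s) \<Longrightarrow> (\<lambda>x. sin (f x)) differentiable (at x within s)"
  by (rule dw_chain[OF DERIV_sin])

lemma dw_cos:
  fixes f :: "real \<Rightarrow> real"
  shows "f differentiable (at x within s) \<Longrightarrow> (\<lambda>x. cos (f x)) differentiable (at x within s)"
  by (rule dw_chain[OF DERIV_cos])

lemma vdw_sin:
  fixes f :: "real \<Rightarrow> real"
  shows "at x within s \<noteq> bot \<Longrightarrow> f differentiable (at x within s) \<Longrightarrow>
    vector_derivative (\<lambda>x. sin (f x)) (at x within s) = vector_derivative f (at x within s) * cos (f x)"
  by (subst vdw_chain[OF _ DERIV_sin]) (auto simp: field_simps)

lemma vdw_cos:
  fixes f :: "real \<Rightarrow> real"
  shows "at x within s \<noteq> bot \<Longrightarrow> f differentiable (at x within s) \<Longrightarrow>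
    vector_derivative (\<lambda>x. cos (f x)) (at x within s) = - (vector_derivative f (at x within s) * sin (f x))"
  by (subst vdw_chain[OF _ DERIV_cos]) (auto simp: field_simps)

lemma dw_norm:
  fixes f :: "real \<Rightarrow> 'a::real_inner"
  assumes "f x \<noteq> 0" "f differentiable (at x within s)"
  shows "(\<lambda>x. norm (f x)) differentiable (at x within s)"
proof -
  have "(\<lambda>x. sqrt (f x \<bullet> f x)) differentiable (at x within s)"
    using assms by (intro dw_sqrt dw_inner) auto
  then show ?thesis by (simp add: norm_eq_sqrt_inner)
qed

lemma vdw_norm:
  fixes f :: "real \<Rightarrow> 'a::real_inner"
  assumes "at x within s \<noteq> bot" "f x \<noteq> 0" "f differentiable (at x within s)"
  shows "vector_derivative (\<lambda>x. norm (f x)) (at x within s) =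
     (f x \<bullet> vector_derivative f (at x within s)) * inverse (norm (f x))"
proof -
  have "vector_derivative (\<lambda>x. sqrt (f x \<bullet> f x)) (at x within s) =
      vector_derivative (\<lambda>x. f x \<bullet> f x) (at x within s) * (inverse 2 * inverse (sqrt (f x \<bullet> f x)))"
    using assms by (intro vdw_sqrt dw_inner) auto
  also have "vector_derivative (\<lambda>x. f x \<bullet> f x) (at x within s) = 2 * (f x \<bullet> vector_derivative f (at x within s))"
    using assms by (subst vdw_inner) (auto simp: inner_commute)
  finally show ?thesis by (simp add: norm_eq_sqrt_inner)
qed


section \<open>Infinitely differentiable functions of one real variable\<close>

definition vd :: "(real \<Rightarrow> 'a::real_normed_vector) \<Rightarrow> real \<Rightarrow> 'a" where
  "vd f = (\<lambda>x. vector_derivative f (at x))"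

fun Ck :: "nat \<Rightarrow> (real \<Rightarrow> 'a::real_normed_vector) \<Rightarrow> bool" where
  "Ck 0 f = True"
| "Ck (Suc k) f = ((\<forall>x. f differentiable (at x)) \<and> Ck k (vd f))"

definition Cinf :: "(real \<Rightarrow> 'a::real_normed_vector) \<Rightarrow> bool" where
  "Cinf f = (\<forall>k. Ck k f)"

lemma Ck_mono: "Ck (Suc k) f \<Longrightarrow> Ck k f"
  by (induction k arbitrary: f) auto

lemma Cinf_differentiable: "Cinf f \<Longrightarrow> f differentiable (at x)"
  unfolding Cinf_def using Ck.simps(2) by blast

lemma Cinf_vd: "Cinf f \<Longrightarrow> Cinf (vd f)"
  unfolding Cinf_def using Ck.simps(2) by blast

lemma Cinf_hvd: "Cinf f \<Longrightarrow> (f has_vector_derivative vd f x) (at x)"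
  using Cinf_differentiable[of f x] by (simp add: vd_def vector_derivative_works)

lemma Cinf_hvd_within: "Cinf f \<Longrightarrow> (f has_vector_derivative vd f x) (at x within s)"
  using Cinf_hvd has_vector_derivative_at_within by blast

lemma Cinf_continuous: "Cinf f \<Longrightarrow> continuous_on S f"
  by (meson Cinf_hvd continuous_at_imp_continuous_on has_vector_derivative_continuous)

lemma Ck_const: "Ck k (\<lambda>x. c)"
proof (induction k arbitrary: c)
  case (Suc k)
  have "vd (\<lambda>x. c) = (\<lambda>x. 0)" by (auto simp: vd_def vdw_const)
  then show ?case using Suc dw_const by simp
qed simp

lemma Ck_add: "Ck k f \<Longrightarrow> Ck k g \<Longrightarrow> Ck k (\<lambda>x. f x + g x)"
proof (induction k arbitrary: f g)
  case (Suc k)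
  have "vd (\<lambda>x. f x + g x) = (\<lambda>x. vd f x + vd g x)"
    using Suc.prems by (auto simp: vd_def vdw_add)
  then show ?case using Suc by (auto intro: dw_add)
qed simp

lemma Ck_diff: "Ck k f \<Longrightarrow> Ck k g \<Longrightarrow> Ck k (\<lambda>x. f x - g x)"
proof (induction k arbitrary: f g)
  case (Suc k)
  have "vd (\<lambda>x. f x - g x) = (\<lambda>x. vd f x - vd g x)"
    using Suc.prems by (auto simp: vd_def vdw_diff)
  then show ?case using Suc by (auto intro: dw_diff)
qed simp

lemma Ck_minus: "Ck k f \<Longrightarrow> Ck k (\<lambda>x. - f x)"
  using Ck_diff[OF Ck_const[of k 0] , of f] by simp

lemma Ck_bil:
  fixes f :: "real \<Rightarrow> 'a::real_normed_vector" and g :: "real \<Rightarrow> 'b::real_normed_vector"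
    and prod :: "'a \<Rightarrow> 'b \<Rightarrow> 'c::real_normed_vector"
  assumes bb: "bounded_bilinear prod"
  shows "Ck k f \<Longrightarrow> Ck k g \<Longrightarrow> Ck k (\<lambda>x. prod (f x) (g x))"
proof (induction k arbitrary: f g)
  case (Suc k)
  have "vd (\<lambda>x. prod (f x) (g x)) = (\<lambda>x. prod (f x) (vd g x) + prod (vd f x) (g x))"
    using Suc.prems by (auto simp: vd_def vdw_bil[OF bb])
  moreover have "Ck k (\<lambda>x. prod (f x) (vd g x) + prod (vd f x) (g x))"
    using Suc by (intro Ck_add Suc.IH) (auto intro: Ck_mono)
  ultimately show ?case using Suc.prems by (auto intro: dw_bil[OF bb])
qed simp

lemmas Ck_scaleR = Ck_bil[OF bounded_bilinear_scaleR]
lemmas Ck_mult = Ck_bil[OF bounded_bilinear_mult]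
lemmas Ck_inner = Ck_bil[OF bounded_bilinear_inner]
lemmas Ck_cross = Ck_bil[OF bb_cross]

lemma Ck_inverse:
  fixes f :: "real \<Rightarrow> real"
  shows "(\<And>x. f x \<noteq> 0) \<Longrightarrow> Ck k f \<Longrightarrow> Ck k (\<lambda>x. inverse (f x))"
proof (induction k arbitrary: f)
  case (Suc k)
  have vdeq: "vd (\<lambda>x. inverse (f x)) = (\<lambda>x. - (vd f x * (inverse (f x) * inverse (f x))))"
    using Suc.prems by (auto simp: vd_def vdw_inverse)
  have "Ck k f" using Suc.prems(2) Ck_mono by blast
  then have ih: "Ck k (\<lambda>x. inverse (f x))" using Suc.IH Suc.prems(1) by blast
  have "Ck k (\<lambda>x. - (vd f x * (inverse (f x) * inverse (f x))))"
    using Suc.prems(2) ih by (intro Ck_minus Ck_mult) simp_all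
  then show ?case using vdeq Suc.prems by (auto intro: dw_inverse)
qed simp

lemma Ck_sqrt:
  fixes f :: "real \<Rightarrow> real"
  shows "(\<And>x. f x > 0) \<Longrightarrow> Ck k f \<Longrightarrow> Ck k (\<lambda>x. sqrt (f x))"
proof (induction k arbitrary: f)
  case (Suc k)
  have vdeq: "vd (\<lambda>x. sqrt (f x)) = (\<lambda>x. vd f x * (inverse 2 * inverse (sqrt (f x))))"
    using Suc.prems by (auto simp: vd_def vdw_sqrt)
  have "Ck k f" using Suc.prems(2) Ck_mono by blast
  then have ih: "Ck k (\<lambda>x. sqrt (f x))" using Suc.IH Suc.prems(1) by blast
  have nz: "\<And>x. sqrt (f x) \<noteq> 0" using Suc.prems(1) by (metis less_irrefl real_sqrt_eq_zero_cancel_iff)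
  have "Ck k (\<lambda>x. vd f x * (inverse 2 * inverse (sqrt (f x))))"
    using Suc.prems(2) ih nz by (intro Ck_mult Ck_const Ck_inverse) simp_all
  then show ?case using vdeq Suc.prems by (auto intro: dw_sqrt)
qed simp

lemma Ck_sincos:
  fixes f :: "real \<Rightarrow> real"
  shows "Ck k f \<Longrightarrow> Ck k (\<lambda>x. sin (f x)) \<and> Ck k (\<lambda>x. cos (f x))"
proof (induction k arbitrary: f)
  case (Suc k)
  have e1: "vd (\<lambda>x. sin (f x)) = (\<lambda>x. vd f x * cos (f x))"
    using Suc.prems by (auto simp: vd_def vdw_sin)
  have e2: "vd (\<lambda>x. cos (f x)) = (\<lambda>x. - (vd f x * sin (f x)))"
    using Suc.prems by (auto simp: vd_def vdw_cos)
  have "Ck k f" using Suc.prems Ck_mono by blast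
  then have ih: "Ck k (\<lambda>x. sin (f x))" "Ck k (\<lambda>x. cos (f x))" using Suc.IH by blast+
  have d: "Ck k (vd f)" using Suc.prems by simp
  have "Ck k (\<lambda>x. vd f x * cos (f x))" by (rule Ck_mult[OF d ih(2)])
  moreover have "Ck k (\<lambda>x. - (vd f x * sin (f x)))" by (rule Ck_minus[OF Ck_mult[OF d ih(1)]])
  ultimately show ?case using e1 e2 Suc.prems by (auto intro: dw_sin dw_cos)
qed simp

lemma Ck_norm:
  fixes f :: "real \<Rightarrow> 'a::real_inner"
  assumes "\<And>x. f x \<noteq> 0" "Ck k f"
  shows "Ck k (\<lambda>x. norm (f x))"
proof -
  have "Ck k (\<lambda>x. sqrt (f x \<bullet> f x))"
    using assms by (intro Ck_sqrt Ck_inner) auto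
  then show ?thesis by (simp add: norm_eq_sqrt_inner)
qed

lemma Cinf_const: "Cinf (\<lambda>x. c)" by (simp add: Cinf_def Ck_const)
lemma Cinf_add: "Cinf f \<Longrightarrow> Cinf g \<Longrightarrow> Cinf (\<lambda>x. f x + g x)" by (simp add: Cinf_def Ck_add)
lemma Cinf_diff: "Cinf f \<Longrightarrow> Cinf g \<Longrightarrow> Cinf (\<lambda>x. f x - g x)" by (simp add: Cinf_def Ck_diff)
lemma Cinf_minus: "Cinf f \<Longrightarrow> Cinf (\<lambda>x. - f x)" by (simp add: Cinf_def Ck_minus)
lemma Cinf_scaleR: "Cinf f \<Longrightarrow> Cinf g \<Longrightarrow> Cinf (\<lambda>x. f x *\<^sub>R g x)" by (simp add: Cinf_def Ck_scaleR)
lemma Cinf_mult: "Cinf f \<Longrightarrow> Cinf g \<Longrightarrow> Cinf (\<lambda>x. f x * g x :: real)" by (simp add: Cinf_def Ck_mult)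
lemma Cinf_inner: "Cinf f \<Longrightarrow> Cinf g \<Longrightarrow> Cinf (\<lambda>x. f x \<bullet> g x)" by (simp add: Cinf_def Ck_inner)
lemma Cinf_cross: "Cinf f \<Longrightarrow> Cinf g \<Longrightarrow> Cinf (\<lambda>x. cross3 (f x) (g x))" by (simp add: Cinf_def Ck_cross)
lemma Cinf_inverse: "(\<And>x. f x \<noteq> 0) \<Longrightarrow> Cinf f \<Longrightarrow> Cinf (\<lambda>x. inverse (f x) :: real)" by (simp add: Cinf_def Ck_inverse)
lemma Cinf_divide: "(\<And>x. f x \<noteq> 0) \<Longrightarrow> Cinf f \<Longrightarrow> Cinf g \<Longrightarrow> Cinf (\<lambda>x. g x / f x :: real)"
  unfolding divide_inverse by (rule Cinf_mult, assumption, rule Cinf_inverse)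
lemma Cinf_sin: "Cinf (f::real\<Rightarrow>real) \<Longrightarrow> Cinf (\<lambda>x. sin (f x))" unfolding Cinf_def using Ck_sincos by simp
lemma Cinf_cos: "Cinf (f::real\<Rightarrow>real) \<Longrightarrow> Cinf (\<lambda>x. cos (f x))" unfolding Cinf_def using Ck_sincos by simp
lemma Cinf_norm: "(\<And>x. f x \<noteq> 0) \<Longrightarrow> Cinf (f::real\<Rightarrow>'a::real_inner) \<Longrightarrow> Cinf (\<lambda>x. norm (f x))"
  unfolding Cinf_def by (intro allI Ck_norm) auto

lemmas Cinf_intros = Cinf_const Cinf_add Cinf_diff Cinf_minus Cinf_scaleR Cinf_mult Cinf_inner Cinf_cross
  Cinf_inverse Cinf_divide Cinf_sin Cinf_cos Cinf_norm




lemma nb_Ico: "(a::real) < b \<Longrightarrow> x \<in> {a..<b} \<Longrightarrow> at x within {a..<b} \<noteq> bot"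
  using trivial_limit_within[of x "{a..<b}"] islimpt_Ico[of a b x] by auto

lemma nb_Icc: "(a::real) < b \<Longrightarrow> x \<in> {a..b} \<Longrightarrow> at x within {a..b} \<noteq> bot"
  using trivial_limit_within[of x "{a..b}"] islimpt_Icc[of a b x] by auto

lemma pd_Du: "pd tb ds (Du f) = pd tb (ds @ [False]) f"
proof (induction ds)
  case (Cons a ds) then show ?case by (cases a) auto
qed simp

lemma smooth_Du: "smooth_strip tb f \<Longrightarrow> smooth_strip tb (Du f)"
  unfolding smooth_strip_def pd_Du by (metis append_Cons pd.simps(2,3))

lemma Du_vd: "Du f t = vd (f t)"
  by (simp add: Du_def vd_def fun_eq_iff)

lemma smooth_Ck:
  assumes "smooth_strip tb f" "t \<in> {0..<tb}"
  shows "Ck k (pd tb ds f t)"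
proof (induction k arbitrary: ds)
  case (Suc k)
  have "\<forall>x. pd tb ds f t differentiable (at x)"
    using assms unfolding smooth_strip_def by (metis differentiableI_vector)
  moreover have "vd (pd tb ds f t) = pd tb (False # ds) f t"
    by (simp add: Du_vd)
  ultimately show ?case using Suc.IH[of "False # ds"] by simp
qed simp

lemma smooth_Cinf: "smooth_strip tb f \<Longrightarrow> t \<in> {0..<tb} \<Longrightarrow> Cinf (f t)"
  using smooth_Ck[of tb f t _ "[]"] by (simp add: Cinf_def)

lemma clairaut:
  fixes f :: "real \<Rightarrow> real \<Rightarrow> 'a::euclidean_space"
  assumes sm: "smooth_strip tb f" and t: "t \<in> {0..<tb}"
  shows "Dt tb (Du f) t u = Du (Dt tb f) t u"
proof -
  let ?S = "{0..<tb}"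
  define ft where "ft = Dt tb f"
  define fu where "fu = Du f"
  define fut where "fut = Du (Dt tb f)"
  define ftu where "ftu = Dt tb (Du f)"
  have H1: "\<And>t u. t \<in> ?S \<Longrightarrow> ((\<lambda>t'. f t' u) has_vector_derivative ft t u) (at t within ?S)"
    using sm unfolding smooth_strip_def ft_def by (metis pd.simps(1,2))
  have H2: "\<And>t u. t \<in> ?S \<Longrightarrow> ((\<lambda>u'. f t u') has_vector_derivative fu t u) (at u)"
    using sm unfolding smooth_strip_def fu_def by (metis pd.simps(1,3))
  have H3: "\<And>t u. t \<in> ?S \<Longrightarrow> ((\<lambda>u'. ft t u') has_vector_derivative fut t u) (at u)"
    using sm unfolding smooth_strip_def ft_def fut_def by (metis pd.simps(1,2,3))
  have H4: "\<And>t u. t \<in> ?S \<Longrightarrow> ((\<lambda>t'. fu t' u) has_vector_derivative ftu t u) (at t within ?S)"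
    using sm unfolding smooth_strip_def fu_def ftu_def by (metis pd.simps(1,2,3))
  have C1: "continuous_on (?S \<times> UNIV) (\<lambda>(t,u). ft t u)"
    using sm unfolding smooth_strip_def ft_def by (metis pd.simps(1,2))
  have C3: "continuous_on (?S \<times> UNIV) (\<lambda>(t,u). fut t u)"
    using sm unfolding smooth_strip_def ft_def fut_def by (metis pd.simps(1,2,3))
  have C4: "continuous_on (?S \<times> UNIV) (\<lambda>(t,u). ftu t u)"
    using sm unfolding smooth_strip_def fu_def ftu_def by (metis pd.simps(1,2,3))
  define b where "b = (t + tb) / 2"
  have b: "t < b" "b < tb" "0 < b" using t by (auto simp: b_def)
  have IS: "{0..b} \<subseteq> ?S" using b by auto
  have contu: "continuous_on {0..b} (\<lambda>s. g s u)" if "continuous_on (?S \<times> UNIV) (\<lambda>(t,u). g t u)"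
    for g :: "real \<Rightarrow> real \<Rightarrow> 'a" and u
  proof -
    have "continuous_on {0..b} (\<lambda>s. (\<lambda>(t,u). g t u) (s, u))"
      by (rule continuous_on_compose2[OF that]) (use IS in \<open>auto intro!: continuous_intros\<close>)
    then show ?thesis by simp
  qed
  have eqint: "integral {0..t1} (\<lambda>s. ftu s u) = integral {0..t1} (\<lambda>s. fut s u)" if t1: "t1 \<in> {0..b}" for t1
  proof -
    have sub: "{0..t1} \<subseteq> ?S" using t1 b by auto
    have a: "((\<lambda>s. ftu s u) has_integral (fu t1 u - fu 0 u)) {0..t1}"
      using t1 b by (intro fundamental_theorem_of_calculus)
        (auto intro!: has_vector_derivative_within_subset[OF H4 sub] dest: subsetD[OF sub])
    have bb: "((\<lambda>s. ft s v) has_integral (f t1 v - f 0 v)) {0..t1}" for v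
      using t1 b by (intro fundamental_theorem_of_calculus)
        (auto intro!: has_vector_derivative_within_subset[OF H1 sub] dest: subsetD[OF sub])
    have cont3: "continuous_on (UNIV \<times> cbox 0 t1) (\<lambda>(v, s). fut s v)"
    proof -
      have "continuous_on (UNIV \<times> cbox 0 t1) (\<lambda>p. (\<lambda>(t,u). fut t u) (snd p, fst p))"
        by (rule continuous_on_compose2[OF C3]) (use sub in \<open>auto intro!: continuous_intros\<close>)
      then show ?thesis by (simp add: split_beta)
    qed
    have c: "((\<lambda>v. integral (cbox 0 t1) (\<lambda>s. ft s v)) has_vector_derivative integral (cbox 0 t1) (\<lambda>s. fut s u)) (at u within UNIV)"
      by (rule leibniz_rule_vector_derivative[OF _ _ cont3])
        (use sub bb H3 in \<open>auto intro: has_vector_derivative_at_within simp: has_integral_integrable\<close>)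
    have "(\<lambda>v. integral (cbox 0 t1) (\<lambda>s. ft s v)) = (\<lambda>v. f t1 v - f 0 v)"
      using bb by (auto simp: integral_unique)
    with c have c': "((\<lambda>v. f t1 v - f 0 v) has_vector_derivative integral {0..t1} (\<lambda>s. fut s u)) (at u)"
      by simp
    have d: "((\<lambda>v. f t1 v - f 0 v) has_vector_derivative (fu t1 u - fu 0 u)) (at u)"
      using t1 b by (intro has_vector_derivative_diff H2) auto
    have "fu t1 u - fu 0 u = integral {0..t1} (\<lambda>s. fut s u)"
      by (rule vector_derivative_unique_at[OF d c'])
    with a show ?thesis by (simp add: integral_unique)
  qed
  have tI: "t \<in> {0..b}" using t b by auto
  have d1: "((\<lambda>x. integral {0..x} (\<lambda>s. ftu s u)) has_vector_derivative ftu t u) (at t within {0..b})"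
    by (rule integral_has_vector_derivative[OF contu[OF C4] tI])
  have d2: "((\<lambda>x. integral {0..x} (\<lambda>s. fut s u)) has_vector_derivative fut t u) (at t within {0..b})"
    by (rule integral_has_vector_derivative[OF contu[OF C3] tI])
  have d1': "((\<lambda>x. integral {0..x} (\<lambda>s. fut s u)) has_vector_derivative ftu t u) (at t within {0..b})"
    by (rule has_vector_derivative_transform[OF tI _ d1]) (simp add: eqint)
  have "ftu t u = fut t u"
    by (rule vector_derivative_unique_within[OF nb_Icc[OF b(3) tI] d1' d2])
  then show ?thesis by (simp add: ftu_def fut_def)
qed




lemma cross_cross_left: "cross3 (cross3 a b) c = (a \<bullet> c) *\<^sub>R b - (b \<bullet> c) *\<^sub>R a"
  for a b c :: "real^3"
  by (simp add: cross3_simps forall_3)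

lemma frame_vec:
  fixes T N x :: "real^3"
  assumes "T \<bullet> T = 1" "N \<bullet> N = 1" "T \<bullet> N = 0"
  shows "x = (x \<bullet> T) *\<^sub>R T + (x \<bullet> N) *\<^sub>R N + (x \<bullet> cross3 T N) *\<^sub>R cross3 T N"
proof -
  let ?B = "cross3 T N"
  have BB: "?B \<bullet> ?B = 1"
  proof -
    have "(norm ?B)\<^sup>2 = 1" using norm_cross_dot[of T N] assms by (simp add: norm_eq_sqrt_inner)
    then show ?thesis by (simp add: power2_norm_eq_inner)
  qed
  have BT: "?B \<bullet> T = 0" and BN: "?B \<bullet> N = 0" by (simp_all add: dot_cross_self)
  define z where "z = x - ((x \<bullet> T) *\<^sub>R T + (x \<bullet> N) *\<^sub>R N + (x \<bullet> ?B) *\<^sub>R ?B)"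
  have zT: "T \<bullet> z = 0" using assms BT BN unfolding z_def
    by (simp add: inner_diff_right inner_add_right inner_commute)
  have zN: "N \<bullet> z = 0" using assms BT BN unfolding z_def
    by (simp add: inner_diff_right inner_add_right inner_commute)
  have zB: "?B \<bullet> z = 0" using assms BB BT BN unfolding z_def
    by (simp add: inner_diff_right inner_add_right inner_commute)
  have "cross3 ?B z = 0" using zT zN by (simp add: cross_cross_left)
  then have "(norm ?B * norm z)\<^sup>2 = 0" using norm_cross_dot[of ?B z] zB by simp
  moreover have "norm ?B = 1" using BB by (simp add: norm_eq_sqrt_inner)
  ultimately have "z = 0" by simp
  then show ?thesis unfolding z_def by simp
qed

lemma frame_inner:
  fixes T N x y :: "real^3"
  assumes "T \<bullet> T = 1" "N \<bullet> N = 1" "T \<bullet> N = 0"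
  shows "x \<bullet> y = (x \<bullet> T) * (y \<bullet> T) + (x \<bullet> N) * (y \<bullet> N) + (x \<bullet> cross3 T N) * (y \<bullet> cross3 T N)"
proof -
  have "x \<bullet> y = x \<bullet> ((y \<bullet> T) *\<^sub>R T + (y \<bullet> N) *\<^sub>R N + (y \<bullet> cross3 T N) *\<^sub>R cross3 T N)"
    using frame_vec[OF assms, of y] by simp
  then show ?thesis by (simp add: inner_add_right algebra_simps)
qed




lemma vd_const_inner:
  fixes f h :: "real \<Rightarrow> 'a::real_inner"
  assumes "Cinf f" "Cinf h" "\<And>u. f u \<bullet> h u = c"
  shows "f u \<bullet> vd h u + vd f u \<bullet> h u = 0"
proof -
  have "vd (\<lambda>u. f u \<bullet> h u) u = f u \<bullet> vd h u + vd f u \<bullet> h u"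
    unfolding vd_def by (rule vdw_inner) (use assms Cinf_differentiable in auto)
  moreover have "(\<lambda>u. f u \<bullet> h u) = (\<lambda>u. c)" using assms(3) by auto
  ultimately show ?thesis by (simp add: vd_def vdw_const)
qed

lemma vd_scaleR: "Cinf f \<Longrightarrow> Cinf h \<Longrightarrow> vd (\<lambda>u. f u *\<^sub>R h u) u = f u *\<^sub>R vd h u + vd f u *\<^sub>R h u"
  unfolding vd_def by (rule vdw_scaleR) (auto intro: Cinf_differentiable)
lemma vd_mult: "Cinf f \<Longrightarrow> Cinf h \<Longrightarrow> vd (\<lambda>u. f u * h u :: real) u = f u * vd h u + vd f u * h u"
  unfolding vd_def by (rule vdw_mult) (auto intro: Cinf_differentiable)
lemma vd_inner: "Cinf f \<Longrightarrow> Cinf h \<Longrightarrow> vd (\<lambda>u. f u \<bullet> h u) u = f u \<bullet> vd h u + vd f u \<bullet> h u"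
  unfolding vd_def by (rule vdw_inner) (auto intro: Cinf_differentiable)
lemma vd_cross: "Cinf f \<Longrightarrow> Cinf h \<Longrightarrow> vd (\<lambda>u. cross3 (f u) (h u)) u = cross3 (f u) (vd h u) + cross3 (vd f u) (h u)"
  unfolding vd_def by (rule vdw_cross) (auto intro: Cinf_differentiable)
lemma vd_add: "Cinf f \<Longrightarrow> Cinf h \<Longrightarrow> vd (\<lambda>u. f u + h u) u = vd f u + vd h u"
  unfolding vd_def by (rule vdw_add) (auto intro: Cinf_differentiable)
lemma vd_diff: "Cinf f \<Longrightarrow> Cinf h \<Longrightarrow> vd (\<lambda>u. f u - h u) u = vd f u - vd h u"
  unfolding vd_def by (rule vdw_diff) (auto intro: Cinf_differentiable)
lemma vd_inverse: "Cinf f \<Longrightarrow> f u \<noteq> 0 \<Longrightarrow> vd (\<lambda>u. inverse (f u) :: real) u = - (vd f u * (inverse (f u) * inverse (f u)))"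
  unfolding vd_def by (rule vdw_inverse) (auto intro: Cinf_differentiable)
lemma vd_sin: "Cinf f \<Longrightarrow> vd (\<lambda>u. sin (f u :: real)) u = vd f u * cos (f u)"
  unfolding vd_def by (rule vdw_sin) (auto intro: Cinf_differentiable)
lemma vd_cos: "Cinf f \<Longrightarrow> vd (\<lambda>u. cos (f u :: real)) u = - (vd f u * sin (f u))"
  unfolding vd_def by (rule vdw_cos) (auto intro: Cinf_differentiable)
lemma vd_norm: "Cinf f \<Longrightarrow> f u \<noteq> 0 \<Longrightarrow> vd (\<lambda>u. norm (f u :: 'a::real_inner)) u = (f u \<bullet> vd f u) * inverse (norm (f u))"
  unfolding vd_def by (rule vdw_norm) (auto intro: Cinf_differentiable)
lemma vd_cong: "f = h \<Longrightarrow> vd f u = vd h u" by simp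

locale FCF =
  fixes K tb :: real
    and \<gamma> :: "real \<Rightarrow> real \<Rightarrow> real^3"
    and \<theta> :: "real \<Rightarrow> real \<Rightarrow> real"
  assumes tb_pos: "0 < tb"
    and smooth_\<gamma>: "smooth_strip tb \<gamma>"
    and smooth_\<theta>: "smooth_strip tb \<theta>"
    and regular: "\<And>t u. t \<in> {0..<tb} \<Longrightarrow> speed \<gamma> t u > 0"
    and kappa_pos: "\<And>t u. t \<in> {0..<tb} \<Longrightarrow> curvature \<gamma> t u > 0"
    and psi2_nz: "\<And>t u. t \<in> {0..<tb} \<Longrightarrow> psi2 \<gamma> \<theta> t u \<noteq> 0"
    and flow_\<gamma>: "\<And>t u. t \<in> {0..<tb} \<Longrightarrow> Dt tb \<gamma> t u = curvature \<gamma> t u *\<^sub>R nu \<gamma> \<theta> t u"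
    and flow_\<theta>: "\<And>t u. t \<in> {0..<tb} \<Longrightarrow> Dt tb \<theta> t u = upsilon K \<gamma> \<theta> t u"
begin

context
  fixes t assumes t: "t \<in> {0..<tb}"
begin

lemma C_gamma: "Cinf (\<gamma> t)" by (rule smooth_Cinf[OF smooth_\<gamma> t])
lemma C_theta: "Cinf (\<theta> t)" by (rule smooth_Cinf[OF smooth_\<theta> t])

lemma speed_eq: "speed \<gamma> t = (\<lambda>u. norm (vd (\<gamma> t) u))"
  by (simp add: speed_def Du_vd fun_eq_iff)

lemma X1_nz: "vd (\<gamma> t) u \<noteq> 0"
  using regular[OF t, of u] by (auto simp: speed_eq)

lemma g_pos: "speed \<gamma> t u > 0" by (rule regular[OF t])

lemma C_speed: "Cinf (speed \<gamma> t)"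
  unfolding speed_eq by (rule Cinf_norm[OF X1_nz Cinf_vd[OF C_gamma]])

lemma Ds_eq: "Ds \<gamma> f t = (\<lambda>u. inverse (speed \<gamma> t u) *\<^sub>R vd (f t) u)"
  by (simp add: Ds_def Du_vd fun_eq_iff divide_inverse)

lemma C_Ds: "Cinf (f t) \<Longrightarrow> Cinf (Ds \<gamma> f t)"
  unfolding Ds_eq
  by (rule Cinf_scaleR[OF Cinf_inverse[OF _ C_speed] Cinf_vd]) (use g_pos in \<open>auto simp: less_le\<close>)

lemma C_T: "Cinf (tangent \<gamma> t)"
  unfolding tangent_def by (rule C_Ds[of \<gamma>, OF C_gamma])

lemma C_A: "Cinf (Ds \<gamma> (tangent \<gamma>) t)"
  by (rule C_Ds[of "tangent \<gamma>", OF C_T])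

lemma kappa_pos': "curvature \<gamma> t u > 0" by (rule kappa_pos[OF t])

lemma curv_eq: "curvature \<gamma> t = (\<lambda>u. norm (Ds \<gamma> (tangent \<gamma>) t u))"
  by (simp add: curvature_def fun_eq_iff)

lemma C_kappa: "Cinf (curvature \<gamma> t)"
  unfolding curv_eq by (rule Cinf_norm[OF _ C_A]) (use kappa_pos' in \<open>auto simp: curv_eq\<close>)

lemma normal_eq: "normal \<gamma> t = (\<lambda>u. inverse (curvature \<gamma> t u) *\<^sub>R Ds \<gamma> (tangent \<gamma>) t u)"
  by (simp add: normal_def fun_eq_iff divide_inverse)

lemma C_N: "Cinf (normal \<gamma> t)"
  unfolding normal_eq
  by (rule Cinf_scaleR[OF Cinf_inverse[OF _ C_kappa] C_A]) (use kappa_pos' in \<open>auto simp: less_le\<close>)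

lemma C_B: "Cinf (binormal \<gamma> t)"
  unfolding binormal_def[abs_def] by (rule Cinf_cross[OF C_T C_N])

lemma C_tau: "Cinf (torsion \<gamma> t)"
  unfolding torsion_def[abs_def] by (rule Cinf_inner[OF C_Ds[of "normal \<gamma>", OF C_N] C_B])

lemma C_psi1: "Cinf (psi1 \<gamma> \<theta> t)"
  unfolding psi1_def[abs_def] by (rule Cinf_mult[OF C_kappa Cinf_cos[OF C_theta]])

lemma C_psi2: "Cinf (psi2 \<gamma> \<theta> t)"
  unfolding psi2_def[abs_def] by (rule Cinf_mult[OF C_kappa Cinf_sin[OF C_theta]])

lemma C_psi3: "Cinf (psi3 \<gamma> \<theta> t)"
  unfolding psi3_def[abs_def] by (rule Cinf_add[OF C_tau C_Ds[of \<theta>, OF C_theta]])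

lemma C_nu: "Cinf (nu \<gamma> \<theta> t)"
  unfolding nu_def[abs_def] by (rule Cinf_add[OF Cinf_scaleR[OF Cinf_cos[OF C_theta] C_N] Cinf_scaleR[OF Cinf_sin[OF C_theta] C_B]])


abbreviation "gg \<equiv> speed \<gamma> t"
abbreviation "TT \<equiv> tangent \<gamma> t"
abbreviation "NN \<equiv> normal \<gamma> t"
abbreviation "BB \<equiv> binormal \<gamma> t"
abbreviation "kk \<equiv> curvature \<gamma> t"
abbreviation "tt \<equiv> torsion \<gamma> t"
abbreviation "X1 \<equiv> vd (\<gamma> t)"

lemma g_nz: "gg u \<noteq> 0" using g_pos[of u] by simp
lemma k_nz: "kk u \<noteq> 0" using kappa_pos'[of u] by simp

lemma T_eq: "TT = (\<lambda>u. inverse (gg u) *\<^sub>R X1 u)"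
  unfolding tangent_def Ds_eq ..

lemma F_X1: "X1 u = gg u *\<^sub>R TT u"
  using g_nz[of u] by (simp add: T_eq)

lemma F_TT: "TT u \<bullet> TT u = 1"
proof -
  have "X1 u \<bullet> X1 u = gg u * gg u" by (simp add: speed_eq dot_square_norm power2_eq_square)
  then show ?thesis using g_nz[of u] by (simp add: T_eq field_simps)
qed

lemma F_A: "Ds \<gamma> (tangent \<gamma>) t u = kk u *\<^sub>R NN u"
  using k_nz[of u] by (simp add: normal_eq)

lemma F_NN: "NN u \<bullet> NN u = 1"
proof -
  have "Ds \<gamma> (tangent \<gamma>) t u \<bullet> Ds \<gamma> (tangent \<gamma>) t u = kk u * kk u"
    by (simp add: curv_eq dot_square_norm power2_eq_square)
  then show ?thesis using k_nz[of u] by (simp add: normal_eq field_simps)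
qed

lemma F_dT: "vd TT u = (gg u * kk u) *\<^sub>R NN u"
proof -
  have "Ds \<gamma> (tangent \<gamma>) t u = inverse (gg u) *\<^sub>R vd TT u" by (simp add: Ds_eq)
  then have "vd TT u = gg u *\<^sub>R Ds \<gamma> (tangent \<gamma>) t u" using g_nz[of u] by simp
  then show ?thesis by (simp add: F_A)
qed

lemma F_TN: "TT u \<bullet> NN u = 0"
proof -
  have "TT u \<bullet> vd TT u + vd TT u \<bullet> TT u = 0" by (rule vd_const_inner[OF C_T C_T F_TT])
  then have "2 * (gg u * kk u) * (TT u \<bullet> NN u) = 0" by (auto simp: F_dT inner_commute)
  then have "(gg u * kk u) * (TT u \<bullet> NN u) = 0" by simp
  moreover have "gg u * kk u \<noteq> 0" using g_pos[of u] kappa_pos'[of u] by simp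
  ultimately show ?thesis by simp
qed

lemma B_eq: "BB u = cross3 (TT u) (NN u)" by (simp add: binormal_def)

lemma F_BB: "BB u \<bullet> BB u = 1"
proof -
  have "(norm (BB u))\<^sup>2 = 1" using norm_cross_dot[of "TT u" "NN u"] F_TT[of u] F_NN[of u] F_TN[of u]
    by (simp add: norm_eq_sqrt_inner B_eq)
  then show ?thesis by (simp add: power2_norm_eq_inner)
qed

lemma F_BT: "BB u \<bullet> TT u = 0" and F_BN: "BB u \<bullet> NN u = 0"
  by (simp_all add: B_eq dot_cross_self)

lemma F_NT: "NN u \<bullet> TT u = 0" and F_TB: "TT u \<bullet> BB u = 0" and F_NB: "NN u \<bullet> BB u = 0"
  using F_TN F_BT F_BN by (simp_all add: inner_commute)

lemmas frame = F_TT F_NN F_TN F_BB F_BT F_BN F_NT F_TB F_NB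

lemma F_inner: "x \<bullet> y = (x \<bullet> TT u) * (y \<bullet> TT u) + (x \<bullet> NN u) * (y \<bullet> NN u) + (x \<bullet> BB u) * (y \<bullet> BB u)"
  unfolding B_eq by (rule frame_inner[OF F_TT F_NN F_TN])

lemma F_dN_N: "vd NN u \<bullet> NN u = 0"
  using vd_const_inner[OF C_N C_N F_NN, of u] by (simp add: inner_commute)

lemma F_dN_T: "vd NN u \<bullet> TT u = - (gg u * kk u)"
proof -
  have e: "TT u \<bullet> vd NN u + vd TT u \<bullet> NN u = 0" by (rule vd_const_inner[OF C_T C_N F_TN])
  have "vd TT u \<bullet> NN u = gg u * kk u" using F_NN[of u] by (simp add: F_dT)
  with e have "TT u \<bullet> vd NN u = - (gg u * kk u)" by linarith
  then show ?thesis by (simp add: inner_commute)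
qed

lemma F_dN_B: "vd NN u \<bullet> BB u = gg u * tt u"
  using g_nz[of u] by (simp add: torsion_def Ds_eq)

lemma F_dB_B: "vd BB u \<bullet> BB u = 0"
  using vd_const_inner[OF C_B C_B F_BB, of u] by (simp add: inner_commute)

lemma F_dB_T: "vd BB u \<bullet> TT u = 0"
proof -
  have e: "BB u \<bullet> vd TT u + vd BB u \<bullet> TT u = 0" by (rule vd_const_inner[OF C_B C_T F_BT])
  have "BB u \<bullet> vd TT u = 0" using F_BN[of u] by (simp add: F_dT)
  with e show ?thesis by linarith
qed

lemma F_dB_N: "vd BB u \<bullet> NN u = - (gg u * tt u)"
proof -
  have e: "BB u \<bullet> vd NN u + vd BB u \<bullet> NN u = 0" by (rule vd_const_inner[OF C_B C_N F_BN])
  have "BB u \<bullet> vd NN u = gg u * tt u" using F_dN_B[of u] by (simp add: inner_commute)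
  with e show ?thesis by linarith
qed

lemma F_dN_N': "NN u \<bullet> vd NN u = 0" and F_dB_B': "BB u \<bullet> vd BB u = 0"
  using F_dN_N F_dB_B by (simp_all add: inner_commute)

lemma X1_fun: "X1 = (\<lambda>u. gg u *\<^sub>R TT u)"
  using F_X1 by auto

lemma F_X2: "vd X1 u = vd gg u *\<^sub>R TT u + (gg u * (gg u * kk u)) *\<^sub>R NN u"
  by (subst X1_fun, subst vd_scaleR[OF C_speed C_T]) (simp add: F_dT)

lemma F_X2_B: "vd X1 u \<bullet> BB u = 0"
  using frame[of u] by (simp add: F_X2 inner_add_left)

lemma F_X1X2: "X1 u \<bullet> vd X1 u = gg u * vd gg u"
  using frame[of u] by (simp add: F_X2 F_X1 inner_add_right inner_commute)

lemma F_dg: "vd gg u = (X1 u \<bullet> vd X1 u) * inverse (gg u)"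
  unfolding speed_eq by (rule vd_norm[OF Cinf_vd[OF C_gamma] X1_nz])

lemma F_dT_explicit:
  "vd TT u = inverse (gg u) *\<^sub>R vd X1 u - ((X1 u \<bullet> vd X1 u) * (inverse (gg u) * inverse (gg u) * inverse (gg u))) *\<^sub>R X1 u"
proof -
  have "vd TT u = inverse (gg u) *\<^sub>R vd X1 u + vd (\<lambda>u. inverse (gg u)) u *\<^sub>R X1 u"
    by (subst T_eq, rule vd_scaleR[OF Cinf_inverse[OF g_nz C_speed] Cinf_vd[OF C_gamma]])
  also have "vd (\<lambda>u. inverse (gg u)) u = - (vd gg u * (inverse (gg u) * inverse (gg u)))"
    by (rule vd_inverse[OF C_speed g_nz])
  finally show ?thesis by (simp add: F_dg algebra_simps)
qed

abbreviation "p1 \<equiv> psi1 \<gamma> \<theta> t"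
abbreviation "p2 \<equiv> psi2 \<gamma> \<theta> t"
abbreviation "p3 \<equiv> psi3 \<gamma> \<theta> t"
abbreviation "VV \<equiv> Dt tb \<gamma> t"

lemma V_eq: "VV = (\<lambda>u. p1 u *\<^sub>R NN u + p2 u *\<^sub>R BB u)"
  by (auto simp: fun_eq_iff flow_\<gamma>[OF t] nu_def psi1_def psi2_def scaleR_add_right)

lemma C_V: "Cinf VV"
  unfolding V_eq by (intro Cinf_add Cinf_scaleR C_psi1 C_psi2 C_N C_B)

lemma F_dV: "vd VV u = p1 u *\<^sub>R vd NN u + vd p1 u *\<^sub>R NN u + (p2 u *\<^sub>R vd BB u + vd p2 u *\<^sub>R BB u)"
  unfolding V_eq
  by (simp add: vd_add[OF Cinf_scaleR[OF C_psi1 C_N] Cinf_scaleR[OF C_psi2 C_B]] vd_scaleR[OF C_psi1 C_N] vd_scaleR[OF C_psi2 C_B])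

lemma F_dV_B: "vd VV u \<bullet> BB u = vd p2 u + p1 u * (gg u * tt u)"
  using frame[of u] F_dN_B[of u] F_dB_B[of u] by (simp add: F_dV inner_add_left)

lemma F_dV_N: "vd VV u \<bullet> NN u = vd p1 u - p2 u * (gg u * tt u)"
  using frame[of u] F_dN_N[of u] F_dB_N[of u] by (simp add: F_dV inner_add_left)

lemma F_dV_T: "vd VV u \<bullet> TT u = - (p1 u * (gg u * kk u))"
  using frame[of u] F_dN_T[of u] F_dB_T[of u] by (simp add: F_dV inner_add_left)

lemma F_ddV_B: "vd (vd VV) u \<bullet> BB u = vd (\<lambda>u. vd p2 u + p1 u * (gg u * tt u)) u + (vd VV u \<bullet> NN u) * (gg u * tt u)"
proof -
  have "vd (\<lambda>u. vd VV u \<bullet> BB u) u = vd VV u \<bullet> vd BB u + vd (vd VV) u \<bullet> BB u"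
    by (rule vd_inner[OF Cinf_vd[OF C_V] C_B])
  moreover have "(\<lambda>u. vd VV u \<bullet> BB u) = (\<lambda>u. vd p2 u + p1 u * (gg u * tt u))"
    using F_dV_B by auto
  moreover have "vd VV u \<bullet> vd BB u = - ((vd VV u \<bullet> NN u) * (gg u * tt u))"
    using F_inner[of "vd VV u" "vd BB u" u] F_dB_T[of u] F_dB_N[of u] F_dB_B[of u]
    by (simp add: inner_commute)
  ultimately show ?thesis by simp
qed


abbreviation "th \<equiv> \<theta> t"

lemma C_dth: "Cinf (vd th)" by (rule Cinf_vd[OF C_theta])
lemma C_dk: "Cinf (vd kk)" by (rule Cinf_vd[OF C_kappa])

lemma p1_eq: "p1 = (\<lambda>u. kk u * cos (th u))" by (simp add: psi1_def[abs_def])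
lemma p2_eq: "p2 = (\<lambda>u. kk u * sin (th u))" by (simp add: psi2_def[abs_def])

lemma S_dp1: "vd p1 u = kk u * (- (vd th u * sin (th u))) + vd kk u * cos (th u)"
  unfolding p1_eq by (simp add: vd_mult[OF C_kappa Cinf_cos[OF C_theta]] vd_cos[OF C_theta])

lemma S_dp2: "vd p2 u = kk u * (vd th u * cos (th u)) + vd kk u * sin (th u)"
  unfolding p2_eq by (simp add: vd_mult[OF C_kappa Cinf_sin[OF C_theta]] vd_sin[OF C_theta])

lemma S_ddp2: "vd (vd p2) u = kk u * (vd th u * (- (vd th u * sin (th u))) + vd (vd th) u * cos (th u))
   + vd kk u * (vd th u * cos (th u)) + (vd kk u * (vd th u * cos (th u)) + vd (vd kk) u * sin (th u))"
proof -
  have e: "vd p2 = (\<lambda>u. kk u * (vd th u * cos (th u)) + vd kk u * sin (th u))"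
    using S_dp2 by auto
  have c1: "Cinf (\<lambda>u. vd th u * cos (th u))" by (rule Cinf_mult[OF C_dth Cinf_cos[OF C_theta]])
  have c2: "Cinf (\<lambda>u. kk u * (vd th u * cos (th u)))" by (rule Cinf_mult[OF C_kappa c1])
  have c3: "Cinf (\<lambda>u. vd kk u * sin (th u))" by (rule Cinf_mult[OF C_dk Cinf_sin[OF C_theta]])
  show ?thesis unfolding e
    by (simp add: vd_add[OF c2 c3] vd_mult[OF C_kappa c1] vd_mult[OF C_dth Cinf_cos[OF C_theta]]
        vd_cos[OF C_theta] vd_mult[OF C_dk Cinf_sin[OF C_theta]] vd_sin[OF C_theta])
qed

lemma S_dinner: "vd (\<lambda>u. vd p2 u + p1 u * (gg u * tt u)) u =
   vd (vd p2) u + (p1 u * (gg u * vd tt u + vd gg u * tt u) + vd p1 u * (gg u * tt u))"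
proof -
  have c1: "Cinf (\<lambda>u. gg u * tt u)" by (rule Cinf_mult[OF C_speed C_tau])
  show ?thesis
    by (simp add: vd_add[OF Cinf_vd[OF C_psi2] Cinf_mult[OF C_psi1 c1]] vd_mult[OF C_psi1 c1]
        vd_mult[OF C_speed C_tau])
qed

lemma S_Dsk: "Ds \<gamma> (curvature \<gamma>) t u = inverse (gg u) * vd kk u"
  by (simp add: Ds_eq)

lemma S_Dssk: "Ds \<gamma> (Ds \<gamma> (curvature \<gamma>)) t u =
   inverse (gg u) * (inverse (gg u) * vd (vd kk) u + (- (vd gg u * (inverse (gg u) * inverse (gg u)))) * vd kk u)"
proof -
  have e: "Ds \<gamma> (curvature \<gamma>) t = (\<lambda>u. inverse (gg u) * vd kk u)" by (simp add: Ds_eq)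
  have ci: "Cinf (\<lambda>u. inverse (gg u))" by (rule Cinf_inverse[OF g_nz C_speed])
  have "Ds \<gamma> (Ds \<gamma> (curvature \<gamma>)) t u = inverse (gg u) * vd (\<lambda>u. inverse (gg u) * vd kk u) u"
    by (simp add: Ds_eq[of "Ds \<gamma> (curvature \<gamma>)"] e)
  then show ?thesis
    by (simp add: vd_mult[OF ci C_dk] vd_inverse[OF C_speed g_nz])
qed

lemma S_p3: "p3 = (\<lambda>u. tt u + inverse (gg u) * vd th u)"
  by (simp add: psi3_def[abs_def] Ds_eq)

lemma S_Dsp3: "Ds \<gamma> (psi3 \<gamma> \<theta>) t u =
   inverse (gg u) * (vd tt u + (inverse (gg u) * vd (vd th) u + (- (vd gg u * (inverse (gg u) * inverse (gg u)))) * vd th u))"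
proof -
  have ci: "Cinf (\<lambda>u. inverse (gg u))" by (rule Cinf_inverse[OF g_nz C_speed])
  have "Ds \<gamma> (psi3 \<gamma> \<theta>) t u = inverse (gg u) * vd p3 u" by (simp add: Ds_eq)
  also have "vd p3 u = vd tt u + (inverse (gg u) * vd (vd th) u + (- (vd gg u * (inverse (gg u) * inverse (gg u)))) * vd th u)"
    unfolding S_p3
    by (simp add: vd_add[OF C_tau Cinf_mult[OF ci C_dth]] vd_mult[OF ci C_dth] vd_inverse[OF C_speed g_nz])
  finally show ?thesis .
qed

end
end



lemma alg_X:
  fixes g dg k dk ddk s c dth ddth tau dtau :: real
  assumes g: "g \<noteq> 0" and k: "k \<noteq> 0"
  shows "let p1 = k * c; p2 = k * s; p3 = tau + inverse g * dth;
     dp1 = k * (- (dth * s)) + dk * c; dp2 = k * (dth * c) + dk * s;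
     ddp2 = k * (dth * (- (dth * s)) + ddth * c) + dk * (dth * c) + (dk * (dth * c) + ddk * s);
     VB = dp2 + p1 * (g * tau); VN = dp1 - p2 * (g * tau);
     VVB = ddp2 + (p1 * (g * dtau + dg * tau) + dp1 * (g * tau)) + VN * (g * tau);
     ig = inverse g; cf = (g * dg) * (ig * ig * ig);
     dsp3 = ig * (dtau + (ig * ddth + (- (dg * (ig * ig))) * dth));
     dsk = ig * dk; dssk = ig * (ig * ddk + (- (dg * (ig * ig))) * dk)
   in inverse k * ig * (ig * VVB - cf * VB) =
      (k * dsp3 + 2 * dsk * p3) * inverse (k\<^sup>2) * p1 + (dssk - k * p3\<^sup>2) * inverse (k\<^sup>2) * p2"
  unfolding Let_def using g k
  by (simp add: field_simps power2_eq_square)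

lemma alg_M:
  fixes g dg k dk s c dth tau :: real
  assumes g: "g \<noteq> 0" and sc: "s * s + c * c = 1"
  shows "s * ((k * (- (dth * s)) + dk * c) - (k * s) * (g * tau)) - c * ((k * (dth * c) + dk * s) + (k * c) * (g * tau))
     = - (g * k * (tau + inverse g * dth))"
proof -
  have "s * ((k * (- (dth * s)) + dk * c) - (k * s) * (g * tau)) - c * ((k * (dth * c) + dk * s) + (k * c) * (g * tau))
     = - (k * dth + k * g * tau) * (s * s + c * c)" by (simp add: algebra_simps)
  also have "\<dots> = - (g * k * (tau + inverse g * dth))" using sc g by (simp add: field_simps)
  finally show ?thesis .
qed

lemma alg_final:
  fixes g k s p3 K X A B' ups L M Nc :: real
  assumes g: "g \<noteq> 0" and k: "k \<noteq> 0" and s: "s \<noteq> 0"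
    and ups: "ups = - k * inverse (k * s) * K - A - k * inverse (k * s) * p3\<^sup>2 - B'"
    and X: "X = A + B'" and L: "L = k * (- X - ups)" and M: "M = - (g * k * p3)"
    and Nc: "Nc = s * (g * (g * k))"
  shows "(L * Nc - M\<^sup>2) / ((k * k) * (g * g) - 0\<^sup>2) = K"
proof -
  have "L = k * (inverse s * (K + p3\<^sup>2))" using k s unfolding L ups X by (simp add: field_simps)
  then have Ls: "L * s = k * (K + p3\<^sup>2)" using s by (simp add: field_simps)
  have "L * Nc = (L * s) * (g * g * k)" unfolding Nc by (simp add: algebra_simps)
  also have "\<dots> = (k * k) * (g * g) * (K + p3\<^sup>2)" unfolding Ls by (simp add: algebra_simps)
  finally have "L * Nc = (k * k) * (g * g) * (K + p3\<^sup>2)" .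
  then show ?thesis using g k s unfolding M by (simp add: field_simps power2_eq_square)
qed




lemma vdw_const_inner_on:
  fixes f h :: "real \<Rightarrow> 'a::real_inner"
  assumes nb: "at x within S \<noteq> bot" and x: "x \<in> S"
    and df: "f differentiable (at x within S)" and dh: "h differentiable (at x within S)"
    and c: "\<And>y. y \<in> S \<Longrightarrow> f y \<bullet> h y = c"
  shows "f x \<bullet> vector_derivative h (at x within S) + vector_derivative f (at x within S) \<bullet> h x = 0"
proof -
  have "((\<lambda>y. f y \<bullet> h y) has_vector_derivative
      (f x \<bullet> vector_derivative h (at x within S) + vector_derivative f (at x within S) \<bullet> h x)) (at x within S)"
    by (rule bounded_bilinear.has_vector_derivative[OF bounded_bilinear_inner])
      (use df dh in \<open>simp_all add: vector_derivative_works[symmetric]\<close>)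
  moreover have "((\<lambda>y. f y \<bullet> h y) has_vector_derivative 0) (at x within S)"
    by (rule has_vector_derivative_transform[OF x _ has_vector_derivative_const[of c]]) (simp add: c)
  ultimately show ?thesis by (rule vector_derivative_unique_within[OF nb])
qed

lemma smooth_dt:
  "smooth_strip tb f \<Longrightarrow> t \<in> {0..<tb} \<Longrightarrow>
    ((\<lambda>t'. pd tb ds f t' u) has_vector_derivative pd tb (True # ds) f t u) (at t within {0..<tb})"
  unfolding smooth_strip_def by blast

context FCF
begin

context
  fixes t0 u0 :: real assumes t0: "t0 \<in> {0..<tb}"
begin

lemma gauss_at: "gauss_curv tb \<gamma> t0 u0 = K"
proof -
  define S where "S = {0..<tb}"
  have t0S: "t0 \<in> S" using t0 by (simp add: S_def)
  have nb: "at t0 within S \<noteq> bot" unfolding S_def by (rule nb_Ico[OF tb_pos t0])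
  define x1 where "x1 = (\<lambda>t'. Du \<gamma> t' u0)"
  define x2 where "x2 = (\<lambda>t'. Du (Du \<gamma>) t' u0)"
  define th' where "th' = (\<lambda>t'. \<theta> t' u0)"
  have hx1: "(x1 has_vector_derivative Dt tb (Du \<gamma>) t0 u0) (at t0 within S)"
    using smooth_dt[OF smooth_\<gamma> t0, of "[False]" u0] unfolding x1_def S_def by simp
  have hx2: "(x2 has_vector_derivative Dt tb (Du (Du \<gamma>)) t0 u0) (at t0 within S)"
    using smooth_dt[OF smooth_\<gamma> t0, of "[False, False]" u0] unfolding x2_def S_def by simp
  have hth: "(th' has_vector_derivative Dt tb \<theta> t0 u0) (at t0 within S)"
    using smooth_dt[OF smooth_\<theta> t0, of "[]" u0] unfolding th'_def S_def by simp
  have dx1: "x1 differentiable (at t0 within S)" and dx2: "x2 differentiable (at t0 within S)" and dth: "th' differentiable (at t0 within S)"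
    using hx1 hx2 hth by (auto intro: differentiableI_vector)
  define gf where "gf = (\<lambda>t'. norm (x1 t'))"
  define ig where "ig = (\<lambda>t'. inverse (gf t'))"
  define Tf where "Tf = (\<lambda>t'. ig t' *\<^sub>R x1 t')"
  define cf where "cf = (\<lambda>t'. (x1 t' \<bullet> x2 t') * (ig t' * ig t' * ig t'))"
  define Pf where "Pf = (\<lambda>t'. ig t' *\<^sub>R x2 t' - cf t' *\<^sub>R x1 t')"
  define Af where "Af = (\<lambda>t'. ig t' *\<^sub>R Pf t')"
  define kf where "kf = (\<lambda>t'. norm (Af t'))"
  define ik where "ik = (\<lambda>t'. inverse (kf t'))"
  define Nf where "Nf = (\<lambda>t'. ik t' *\<^sub>R Af t')"
  define Bf where "Bf = (\<lambda>t'. cross3 (Tf t') (Nf t'))"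
  define nuf where "nuf = (\<lambda>t'. cos (th' t') *\<^sub>R Nf t' + sin (th' t') *\<^sub>R Bf t')"
  define Vf where "Vf = (\<lambda>t'. kf t' *\<^sub>R nuf t')"
  have ag_x1: "x1 t' = vd (\<gamma> t') u0" for t' by (simp add: x1_def Du_vd)
  have ag_x2: "x2 t' = vd (vd (\<gamma> t')) u0" for t' by (simp add: x2_def Du_vd)
  have ag_g: "gf t' = speed \<gamma> t' u0" for t' by (simp add: gf_def speed_def x1_def)
  have ag_T: "Tf t' = tangent \<gamma> t' u0" if "t' \<in> S" for t'
    using that by (simp add: Tf_def ig_def ag_g T_eq S_def ag_x1)
  have ag_P: "Pf t' = vd (tangent \<gamma> t') u0" if "t' \<in> S" for t'
    using that by (simp add: Pf_def cf_def ig_def ag_g F_dT_explicit S_def ag_x1 ag_x2)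
  have ag_A: "Af t' = Ds \<gamma> (tangent \<gamma>) t' u0" if "t' \<in> S" for t'
    using that by (simp add: Af_def ag_P ig_def ag_g Ds_eq S_def)
  have ag_k: "kf t' = curvature \<gamma> t' u0" if "t' \<in> S" for t'
    using that by (simp add: kf_def ag_A curvature_def)
  have ag_N: "Nf t' = normal \<gamma> t' u0" if "t' \<in> S" for t'
    using that by (simp add: Nf_def ik_def ag_k ag_A normal_def divide_inverse)
  have ag_B: "Bf t' = binormal \<gamma> t' u0" if "t' \<in> S" for t'
    using that by (simp add: Bf_def ag_T ag_N binormal_def)
  have ag_nu: "nuf t' = nu \<gamma> \<theta> t' u0" if "t' \<in> S" for t'
    using that by (simp add: nuf_def ag_N ag_B nu_def th'_def)
  have ag_V: "Vf t' = Dt tb \<gamma> t' u0" if "t' \<in> S" for t'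
    using that by (simp add: Vf_def ag_k ag_nu flow_\<gamma> S_def)
  have x1nz: "x1 t0 \<noteq> 0" using X1_nz[OF t0] by (simp add: ag_x1)
  have gnz: "gf t0 \<noteq> 0" using g_nz[OF t0] by (simp add: ag_g)
  have Anz: "Af t0 \<noteq> 0" using kappa_pos'[OF t0, of u0] ag_A[OF t0S] by (simp add: curvature_def)
  have knz: "kf t0 \<noteq> 0" using Anz by (simp add: kf_def)
  have dgf: "gf differentiable (at t0 within S)" unfolding gf_def by (rule dw_norm[OF x1nz dx1])
  have dig: "ig differentiable (at t0 within S)" unfolding ig_def by (rule dw_inverse[OF gnz dgf])
  have dTf: "Tf differentiable (at t0 within S)" unfolding Tf_def by (rule dw_scaleR[OF dig dx1])
  have dcf: "cf differentiable (at t0 within S)" unfolding cf_def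
    by (intro dw_mult dw_inner dx1 dx2 dig)
  have dPf: "Pf differentiable (at t0 within S)" unfolding Pf_def
    by (intro dw_diff dw_scaleR dig dx2 dcf dx1)
  have dAf: "Af differentiable (at t0 within S)" unfolding Af_def by (rule dw_scaleR[OF dig dPf])
  have dkf: "kf differentiable (at t0 within S)" unfolding kf_def by (rule dw_norm[OF Anz dAf])
  have dik: "ik differentiable (at t0 within S)" unfolding ik_def by (rule dw_inverse[OF knz dkf])
  have dNf: "Nf differentiable (at t0 within S)" unfolding Nf_def by (rule dw_scaleR[OF dik dAf])
  have dBf: "Bf differentiable (at t0 within S)" unfolding Bf_def by (rule dw_cross[OF dTf dNf])
  have dcos: "(\<lambda>t'. cos (th' t')) differentiable (at t0 within S)" by (rule dw_cos[OF dth])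
  have dsin: "(\<lambda>t'. sin (th' t')) differentiable (at t0 within S)" by (rule dw_sin[OF dth])
  have dnuf: "nuf differentiable (at t0 within S)" unfolding nuf_def
    by (intro dw_add dw_scaleR dcos dsin dNf dBf)
  have dVf: "Vf differentiable (at t0 within S)" unfolding Vf_def by (rule dw_scaleR[OF dkf dnuf])
  define D :: "(real \<Rightarrow> real^3) \<Rightarrow> real^3" where "D h = vector_derivative h (at t0 within S)" for h
  define Dr :: "(real \<Rightarrow> real) \<Rightarrow> real" where "Dr h = vector_derivative h (at t0 within S)" for h
  have DV: "D Vf = kf t0 *\<^sub>R D nuf + Dr kf *\<^sub>R nuf t0"
    unfolding D_def Dr_def Vf_def by (rule vdw_scaleR[OF nb dkf dnuf])
  have Dnu: "D nuf = (cos (th' t0) *\<^sub>R D Nf + (- (Dr th' * sin (th' t0))) *\<^sub>R Nf t0)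
      + (sin (th' t0) *\<^sub>R D Bf + (Dr th' * cos (th' t0)) *\<^sub>R Bf t0)"
    unfolding D_def Dr_def nuf_def
    by (simp add: vdw_add[OF nb dw_scaleR[OF dcos dNf] dw_scaleR[OF dsin dBf]]
        vdw_scaleR[OF nb dcos dNf] vdw_scaleR[OF nb dsin dBf] vdw_cos[OF nb dth] vdw_sin[OF nb dth])
  have DN: "D Nf = ik t0 *\<^sub>R D Af + Dr ik *\<^sub>R Af t0"
    unfolding D_def Dr_def Nf_def by (rule vdw_scaleR[OF nb dik dAf])
  have DA: "D Af = ig t0 *\<^sub>R D Pf + Dr ig *\<^sub>R Pf t0"
    unfolding D_def Dr_def Af_def by (rule vdw_scaleR[OF nb dig dPf])
  have DP: "D Pf = (ig t0 *\<^sub>R D x2 + Dr ig *\<^sub>R x2 t0) - (cf t0 *\<^sub>R D x1 + Dr cf *\<^sub>R x1 t0)"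
    unfolding D_def Dr_def Pf_def
    by (simp add: vdw_diff[OF nb dw_scaleR[OF dig dx2] dw_scaleR[OF dcf dx1]]
        vdw_scaleR[OF nb dig dx2] vdw_scaleR[OF nb dcf dx1])
  have Dx1: "D x1 = Dt tb (Du \<gamma>) t0 u0" unfolding D_def by (rule vector_derivative_within[OF nb hx1])
  have Dx2: "D x2 = Dt tb (Du (Du \<gamma>)) t0 u0" unfolding D_def by (rule vector_derivative_within[OF nb hx2])
  have Dth: "Dr th' = Dt tb \<theta> t0 u0" unfolding Dr_def by (rule vector_derivative_within[OF nb hth])
  have cNN: "Nf t0 \<bullet> D Nf + D Nf \<bullet> Nf t0 = 0" unfolding D_def
    by (rule vdw_const_inner_on[OF nb t0S dNf dNf, of 1]) (simp add: ag_N F_NN S_def)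
  have cBB: "Bf t0 \<bullet> D Bf + D Bf \<bullet> Bf t0 = 0" unfolding D_def
    by (rule vdw_const_inner_on[OF nb t0S dBf dBf, of 1]) (simp add: ag_B F_BB S_def)
  have cBN: "Bf t0 \<bullet> D Nf + D Bf \<bullet> Nf t0 = 0" unfolding D_def
    by (rule vdw_const_inner_on[OF nb t0S dBf dNf, of 0]) (simp add: ag_B ag_N F_BN S_def)
  define g0 where "g0 = speed \<gamma> t0 u0"
  define k0 where "k0 = curvature \<gamma> t0 u0"
  define T0 where "T0 = tangent \<gamma> t0 u0"
  define N0 where "N0 = normal \<gamma> t0 u0"
  define B0 where "B0 = binormal \<gamma> t0 u0"
  define s0 where "s0 = sin (\<theta> t0 u0)"
  define c0 where "c0 = cos (\<theta> t0 u0)"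
  have sc: "s0 * s0 + c0 * c0 = 1" unfolding s0_def c0_def
    by (metis power2_eq_square sin_cos_squared_add)
  note fr = frame[OF t0, of u0, folded T0_def N0_def B0_def]
  have g0nz: "g0 \<noteq> 0" and k0nz: "k0 \<noteq> 0" using g_nz[OF t0] k_nz[OF t0] by (auto simp: g0_def k0_def)
  have vN: "Nf t0 = N0" and vB: "Bf t0 = B0" using ag_N[OF t0S] ag_B[OF t0S] by (simp_all add: N0_def B0_def)
  have vA: "Af t0 = k0 *\<^sub>R N0" using ag_A[OF t0S] F_A[OF t0] by (simp add: k0_def N0_def)
  have vP: "Pf t0 = (g0 * k0) *\<^sub>R N0" using ag_P[OF t0S] F_dT[OF t0] by (simp add: g0_def k0_def N0_def)
  have vx1: "x1 t0 = g0 *\<^sub>R T0" using ag_x1 F_X1[OF t0] by (simp add: g0_def T0_def)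
  have vx2B: "x2 t0 \<bullet> B0 = 0" using ag_x2 F_X2_B[OF t0] by (simp add: B0_def)
  have vig: "ig t0 = inverse g0" by (simp add: ig_def ag_g g0_def)
  have vik: "ik t0 = inverse k0" using ag_k[OF t0S] by (simp add: ik_def k0_def)
  have vcf: "cf t0 = (g0 * vd (speed \<gamma> t0) u0) * (inverse g0 * inverse g0 * inverse g0)"
    using F_X1X2[OF t0, of u0] by (simp add: cf_def vig ag_x1 ag_x2 g0_def)
  have vth: "th' t0 = \<theta> t0 u0" by (simp add: th'_def)
  have XB: "D Nf \<bullet> B0 = inverse k0 * (inverse g0 * (inverse g0 * (D x2 \<bullet> B0) - cf t0 * (D x1 \<bullet> B0)))"
  proof -
    have "D Pf \<bullet> B0 = inverse g0 * (D x2 \<bullet> B0) - cf t0 * (D x1 \<bullet> B0)"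
      using fr vx2B by (simp add: DP vig vx1 inner_diff_left inner_add_left)
    then show ?thesis using fr by (simp add: DN DA vik vig vA vP inner_add_left)
  qed
  have DNN: "D Nf \<bullet> N0 = 0" using cNN by (simp add: vN inner_commute)
  have DBB: "D Bf \<bullet> B0 = 0" using cBB by (simp add: vB inner_commute)
  have DBN: "D Bf \<bullet> N0 = - (D Nf \<bullet> B0)" using cBN by (simp add: vN vB inner_commute)
  define nn where "nn = s0 *\<^sub>R N0 - c0 *\<^sub>R B0"
  have vnu: "nuf t0 = c0 *\<^sub>R N0 + s0 *\<^sub>R B0" by (simp add: nuf_def vth vN vB s0_def c0_def)
  have nunn: "nuf t0 \<bullet> nn = 0" using fr
    by (simp add: vnu nn_def inner_add_left inner_diff_right algebra_simps)
  have Dnunn: "D nuf \<bullet> nn = - (D Nf \<bullet> B0 + Dr th') * (s0 * s0 + c0 * c0)"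
    using fr DNN DBB DBN
    by (simp add: Dnu nn_def vth vN vB s0_def[symmetric] c0_def[symmetric] inner_add_left inner_diff_right
        algebra_simps)
  have Lval: "D Vf \<bullet> nn = k0 * (- (D Nf \<bullet> B0) - Dr th')"
    using Dnunn nunn sc ag_k[OF t0S] by (simp add: DV inner_add_left k0_def)
  have cl1: "Dt tb (Du \<gamma>) t0 = vd (Dt tb \<gamma> t0)"
    by (rule ext) (simp add: clairaut[OF smooth_\<gamma> t0] Du_vd)
  have cl2: "Dt tb (Du (Du \<gamma>)) t0 u0 = vd (vd (Dt tb \<gamma> t0)) u0"
    using clairaut[OF smooth_Du[OF smooth_\<gamma>] t0, of u0] by (simp add: Du_vd cl1)
  define dg where "dg = vd (speed \<gamma> t0) u0"
  define dk where "dk = vd (curvature \<gamma> t0) u0"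
  define ddk where "ddk = vd (vd (curvature \<gamma> t0)) u0"
  define dth where "dth = vd (\<theta> t0) u0"
  define ddth where "ddth = vd (vd (\<theta> t0)) u0"
  define tau where "tau = torsion \<gamma> t0 u0"
  define dtau where "dtau = vd (torsion \<gamma> t0) u0"
  note defs0 = g0_def[symmetric] k0_def[symmetric] s0_def[symmetric] c0_def[symmetric] dg_def[symmetric]
    dk_def[symmetric] ddk_def[symmetric] dth_def[symmetric] ddth_def[symmetric] tau_def[symmetric]
    dtau_def[symmetric] N0_def[symmetric] B0_def[symmetric] T0_def[symmetric]
  have VB: "vd (Dt tb \<gamma> t0) u0 \<bullet> B0 = (k0 * (dth * c0) + dk * s0) + (k0 * c0) * (g0 * tau)"
    using F_dV_B[OF t0, of u0] S_dp2[OF t0, of u0] by (simp add: psi1_def defs0)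
  have VN: "vd (Dt tb \<gamma> t0) u0 \<bullet> N0 = (k0 * (- (dth * s0)) + dk * c0) - (k0 * s0) * (g0 * tau)"
    using F_dV_N[OF t0, of u0] S_dp1[OF t0, of u0] by (simp add: psi2_def defs0)
  have VVB: "vd (vd (Dt tb \<gamma> t0)) u0 \<bullet> B0 =
      (k0 * (dth * (- (dth * s0)) + ddth * c0) + dk * (dth * c0) + (dk * (dth * c0) + ddk * s0))
      + ((k0 * c0) * (g0 * dtau + dg * tau) + (k0 * (- (dth * s0)) + dk * c0) * (g0 * tau))
      + ((k0 * (- (dth * s0)) + dk * c0) - (k0 * s0) * (g0 * tau)) * (g0 * tau)"
    using F_ddV_B[OF t0, of u0] S_dinner[OF t0, of u0] S_ddp2[OF t0, of u0] S_dp1[OF t0, of u0] VN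
    by (simp add: psi1_def defs0)
  define A where "A = (k0 * Ds \<gamma> (psi3 \<gamma> \<theta>) t0 u0 + 2 * Ds \<gamma> (curvature \<gamma>) t0 u0 * psi3 \<gamma> \<theta> t0 u0)
      * inverse (k0\<^sup>2) * psi1 \<gamma> \<theta> t0 u0"
  define B' where "B' = (Ds \<gamma> (Ds \<gamma> (curvature \<gamma>)) t0 u0 - k0 * (psi3 \<gamma> \<theta> t0 u0)\<^sup>2) * inverse (k0\<^sup>2) * psi2 \<gamma> \<theta> t0 u0"
  note AX = alg_X[where g = g0 and dg = dg and k = k0 and dk = dk and ddk = ddk and s = s0 and c = c0
      and dth = dth and ddth = ddth and tau = tau and dtau = dtau, OF g0nz k0nz, unfolded Let_def]
  have Xeq: "D Nf \<bullet> B0 = A + B'"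
  proof -
    have "D Nf \<bullet> B0 = inverse k0 * inverse g0 * (inverse g0 *
      ((k0 * (dth * (- (dth * s0)) + ddth * c0) + dk * (dth * c0) + (dk * (dth * c0) + ddk * s0))
      + ((k0 * c0) * (g0 * dtau + dg * tau) + (k0 * (- (dth * s0)) + dk * c0) * (g0 * tau))
      + ((k0 * (- (dth * s0)) + dk * c0) - (k0 * s0) * (g0 * tau)) * (g0 * tau))
      - (g0 * dg) * (inverse g0 * inverse g0 * inverse g0) * ((k0 * (dth * c0) + dk * s0) + (k0 * c0) * (g0 * tau)))"
      by (simp add: XB Dx1 Dx2 cl1 cl2 VB VVB vcf defs0 mult.assoc)
    also have "\<dots> = A + B'"
      unfolding AX A_def B'_def
      by (simp add: S_Dsp3[OF t0] S_Dsk[OF t0] S_Dssk[OF t0] S_p3[OF t0] psi1_def psi2_def defs0)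
    finally show ?thesis .
  qed
  have Ltr: "Dt tb (Dt tb \<gamma>) t0 u0 = D Vf"
  proof -
    have "((\<lambda>t'. Dt tb \<gamma> t' u0) has_vector_derivative D Vf) (at t0 within S)"
      by (rule has_vector_derivative_transform[OF t0S _ dVf[unfolded vector_derivative_works, folded D_def]])
        (simp add: ag_V)
    then show ?thesis unfolding Dt_def[of tb "Dt tb \<gamma>"] S_def[symmetric]
      by (rule vector_derivative_within[OF nb])
  qed
  have Xt: "Dt tb \<gamma> t0 u0 = k0 *\<^sub>R (c0 *\<^sub>R N0 + s0 *\<^sub>R B0)"
    using flow_\<gamma>[OF t0, of u0] by (simp add: nu_def defs0)
  have Xu: "Du \<gamma> t0 u0 = g0 *\<^sub>R T0" using F_X1[OF t0, of u0] by (simp add: Du_vd defs0)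
  have BeqT: "B0 = cross3 T0 N0" by (simp add: B0_def T0_def N0_def binormal_def)
  have NxT: "cross3 N0 T0 = - B0" by (simp add: BeqT cross_skew[of N0 T0])
  have BxT: "cross3 B0 T0 = N0" using fr by (simp add: BeqT cross_cross_left inner_commute)
  have cr: "cross3 (Dt tb \<gamma> t0 u0) (Du \<gamma> t0 u0) = (k0 * g0) *\<^sub>R nn"
    by (simp add: Xt Xu cross_mult_left cross_mult_right cross_add_left NxT BxT nn_def algebra_simps)
  have nnnn: "nn \<bullet> nn = 1" using fr sc
    by (simp add: nn_def inner_diff_left inner_diff_right algebra_simps)
  have k0p: "k0 > 0" and g0p: "g0 > 0" using kappa_pos'[OF t0, of u0] g_pos[OF t0, of u0]
    by (simp_all add: k0_def g0_def)
  have ncr: "norm (cross3 (Dt tb \<gamma> t0 u0) (Du \<gamma> t0 u0)) = k0 * g0"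
    using nnnn k0p g0p by (simp add: cr norm_eq_sqrt_inner)
  have nvec: "(1 / norm (cross3 (Dt tb \<gamma> t0 u0) (Du \<gamma> t0 u0))) *\<^sub>R cross3 (Dt tb \<gamma> t0 u0) (Du \<gamma> t0 u0) = nn"
    using k0p g0p unfolding ncr by (simp add: cr)
  have E: "Dt tb \<gamma> t0 u0 \<bullet> Dt tb \<gamma> t0 u0 = k0 * k0"
  proof -
    have "Dt tb \<gamma> t0 u0 \<bullet> Dt tb \<gamma> t0 u0 = (k0 * k0) * (s0 * s0 + c0 * c0)" using fr
      by (simp add: Xt inner_add_left inner_add_right algebra_simps)
    then show ?thesis using sc by simp
  qed
  have Fz: "Dt tb \<gamma> t0 u0 \<bullet> Du \<gamma> t0 u0 = 0" using fr
    by (simp add: Xt Xu inner_add_left)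
  have G: "Du \<gamma> t0 u0 \<bullet> Du \<gamma> t0 u0 = g0 * g0" using fr by (simp add: Xu)
  have Lc: "Dt tb (Dt tb \<gamma>) t0 u0 \<bullet> nn = k0 * (- (D Nf \<bullet> B0) - Dt tb \<theta> t0 u0)"
    by (simp add: Ltr Lval Dth)
  have Mc: "Du (Dt tb \<gamma>) t0 u0 \<bullet> nn = - (g0 * k0 * (tau + inverse g0 * dth))"
  proof -
    have "Du (Dt tb \<gamma>) t0 u0 \<bullet> nn = s0 * (vd (Dt tb \<gamma> t0) u0 \<bullet> N0) - c0 * (vd (Dt tb \<gamma> t0) u0 \<bullet> B0)"
      by (simp add: Du_vd nn_def inner_diff_right)
    also have "\<dots> = - (g0 * k0 * (tau + inverse g0 * dth))"
      unfolding VN VB by (rule alg_M[OF g0nz sc])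
    finally show ?thesis .
  qed
  have Nc: "Du (Du \<gamma>) t0 u0 \<bullet> nn = s0 * (g0 * (g0 * k0))"
    using fr F_X2[OF t0, of u0] by (simp add: Du_vd nn_def inner_diff_right inner_add_left defs0)
  have p3v: "psi3 \<gamma> \<theta> t0 u0 = tau + inverse g0 * dth" by (simp add: S_p3[OF t0] defs0)
  have s0nz: "s0 \<noteq> 0" using psi2_nz[OF t0, of u0] by (simp add: psi2_def s0_def)
  have ups: "Dt tb \<theta> t0 u0 = - k0 * inverse (k0 * s0) * K - A - k0 * inverse (k0 * s0) * (psi3 \<gamma> \<theta> t0 u0)\<^sup>2 - B'"
    by (simp add: flow_\<theta>[OF t0] upsilon_def Let_def A_def B'_def psi2_def defs0)
  have "(Dt tb (Dt tb \<gamma>) t0 u0 \<bullet> nn * (Du (Du \<gamma>) t0 u0 \<bullet> nn) - (Du (Dt tb \<gamma>) t0 u0 \<bullet> nn)\<^sup>2)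
      / ((k0 * k0) * (g0 * g0) - 0\<^sup>2) = K"
    by (rule alg_final[OF g0nz k0nz s0nz ups Xeq Lc _ Nc]) (simp add: Mc p3v)
  then show ?thesis
    unfolding gauss_curv_def Let_def nvec E Fz G by simp

qed

end
end

theorem mainTheorem18:
  fixes K tb :: real
    and \<gamma> :: "real \<Rightarrow> real \<Rightarrow> real^3"
    and \<theta> :: "real \<Rightarrow> real \<Rightarrow> real"
  assumes tb_pos: "0 < tb"
    and smooth_\<gamma>: "smooth_strip tb \<gamma>"
    and smooth_\<theta>: "smooth_strip tb \<theta>"
    and periodic_\<gamma>: "\<And>t u. t \<in> {0..<tb} \<Longrightarrow> \<gamma> t (u + 2 * pi) = \<gamma> t u"
    and periodic_\<theta>: "\<And>t u. t \<in> {0..<tb} \<Longrightarrow> \<theta> t (u + 2 * pi) = \<theta> t u"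
    and regular: "\<And>t u. t \<in> {0..<tb} \<Longrightarrow> speed \<gamma> t u > 0"
    and kappa_pos: "\<And>t u. t \<in> {0..<tb} \<Longrightarrow> curvature \<gamma> t u > 0"
    and psi2_nz: "\<And>t u. t \<in> {0..<tb} \<Longrightarrow> psi2 \<gamma> \<theta> t u \<noteq> 0"
    and flow_\<gamma>: "\<And>t u. t \<in> {0..<tb} \<Longrightarrow> Dt tb \<gamma> t u = curvature \<gamma> t u *\<^sub>R nu \<gamma> \<theta> t u"
    and flow_\<theta>: "\<And>t u. t \<in> {0..<tb} \<Longrightarrow> Dt tb \<theta> t u = upsilon K \<gamma> \<theta> t u"
  shows "\<forall>t\<in>{0..<tb}. \<forall>u. gauss_curv tb \<gamma> t u = K"
proof -
  interpret FCF K tb \<gamma> \<theta>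
    by unfold_locales (use tb_pos smooth_\<gamma> smooth_\<theta> regular kappa_pos psi2_nz flow_\<gamma> flow_\<theta> in auto)
  show ?thesis using gauss_at by blast
qed

end
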